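(* Fix $\theta$ with $\phi(\theta)<\beta$ and $Q\in\{0,1\}$, and suppose $\tau_1^d(\theta)\neq\tau_2^d(\theta)$. For every $\tau$ strictly between $\tau_1^d(\theta)$ and $\tau_2^d(\theta)$, we have $s_1(\theta,\tau)>s_2(\theta,\tau)$ if and only if $u(s_2(\theta,\tau))<u(s_1(\theta,\tau))$ (i.e., the firm prefers $s_2$ to $s_1$).
   Context: Setup. Let $Q\in\{0,1\}$ be a random variable with $\mathbb P(Q=1)=\pi\in(0,1)$, and let $(\Theta,\Gamma)$ be a real-valued random vector whose conditional joint density given $Q=1$ is $h_q$ and given $Q=0$ is $h_u$, both strictly positive on $\mathbb R^2$. Monotone likelihood ratio assumption: $l(\theta,\gamma)=h_q(\theta,\gamma)/h_u(\theta,\gamma)$ is continuous and strictly increasing in each of $\theta$ and $\gamma$, and for each $\theta$ the map $\gamma\mapsto l(\theta,\gamma)$ has infimum $0$ and supremum $+\infty$. Fix payoffs $x_q>0$, $x_u>0$. For $\tau\in(-x_u,x_q)$ let $A(\tau)=\mathbb 1\{l(\Theta,\Gamma)>\frac{(1-\pi)(x_u+\tau)}{\pi(x_q-\tau)}\}$, $s_1(\theta,\tau)=\mathbb E[Q\mid\Theta=\theta,A(\tau)=1]$, $s_2(\theta,\tau)=\mathbb E[A(\tau)\mid\Theta=\theta]$, $\phi(\theta)=\mathbb P(Q=1\mid\Theta=\theta)$. Regret. Fix a cutoff $c\in(-x_u,x_q)$ and let $\beta=(x_u+c)/(x_q+x_u)\in(0,1)$. For a score value $s\in[0,1]$ and a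 qualification value $Q\in\{0,1\}$ define $\mathcal N(s)=sx_q-(1-s)x_u$, $A'(s)=\mathbb 1\{\mathcal N(s)>c\}$ (i.e. $s>\beta$), $\mathcal P(s)=A'(s)(Qx_q-(1-Q)x_u)$, and the individual regret $u(s)=\mathcal N(s)-\mathcal P(s)$. The critical prejudice $\tau_k^d(\theta)$, $k=1,2$, is the unique $\tau\in(-x_u,x_q)$ with $s_k(\theta,\tau)=\beta$ (it exists for $k=1$ when $\phi(\theta)<\beta$, and always for $k=2$). The firm prefers $s$ to $s'$ at $(\theta,\tau)$ if $u(s(\theta,\tau))<u(s'(\theta,\tau))$. *)

theory Defs
  imports "HOL-Analysis.Analysis"
begin

definition lr :: "(real \<times> real \<Rightarrow> real) \<Rightarrow> (real \<times> real \<Rightarrow> real) \<Rightarrow> real \<times> real \<Rightarrow> real" where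
  "lr hq hu p = hq p / hu p"

definition thr :: "real \<Rightarrow> real \<Rightarrow> real \<Rightarrow> real \<Rightarrow> real" where
  "thr pr xq xu tau = ((1 - pr) * (xu + tau)) / (pr * (xq - tau))"

definition acc_set :: "(real \<times> real \<Rightarrow> real) \<Rightarrow> (real \<times> real \<Rightarrow> real) \<Rightarrow> real \<Rightarrow> real \<Rightarrow> real \<Rightarrow> real \<Rightarrow> real \<Rightarrow> real set" where
  "acc_set hq hu pr xq xu theta tau = {gamma. lr hq hu (theta, gamma) > thr pr xq xu tau}"

text \<open>P(Q=1, A(tau)=1 | Theta=theta) and P(Q=0, A(tau)=1 | Theta=theta), up to the common
  factor given by the marginal density of Theta at theta.\<close>
definition accq :: "(real \<times> real \<Rightarrow> real) \<Rightarrow> (real \<times> real \<Rightarrow> real) \<Rightarrow> real \<Rightarrow> real \<Rightarrow> real \<Rightarrow> real \<Rightarrow> real \<Rightarrow> real" where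
  "accq hq hu pr xq xu theta tau =
     pr * (LINT gamma|lborel. indicator (acc_set hq hu pr xq xu theta tau) gamma * hq (theta, gamma))"

definition accu :: "(real \<times> real \<Rightarrow> real) \<Rightarrow> (real \<times> real \<Rightarrow> real) \<Rightarrow> real \<Rightarrow> real \<Rightarrow> real \<Rightarrow> real \<Rightarrow> real \<Rightarrow> real" where
  "accu hq hu pr xq xu theta tau =
     (1 - pr) * (LINT gamma|lborel. indicator (acc_set hq hu pr xq xu theta tau) gamma * hu (theta, gamma))"

definition margq :: "(real \<times> real \<Rightarrow> real) \<Rightarrow> real \<Rightarrow> real \<Rightarrow> real" where
  "margq hq pr theta = pr * (LINT gamma|lborel. hq (theta, gamma))"

definition margu :: "(real \<times> real \<Rightarrow> real) \<Rightarrow> real \<Rightarrow> real \<Rightarrow> real" where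
  "margu hu pr theta = (1 - pr) * (LINT gamma|lborel. hu (theta, gamma))"

text \<open>s_1(theta,tau) = E[Q | Theta = theta, A(tau) = 1].\<close>
definition s1 :: "(real \<times> real \<Rightarrow> real) \<Rightarrow> (real \<times> real \<Rightarrow> real) \<Rightarrow> real \<Rightarrow> real \<Rightarrow> real \<Rightarrow> real \<Rightarrow> real \<Rightarrow> real" where
  "s1 hq hu pr xq xu theta tau =
     accq hq hu pr xq xu theta tau / (accq hq hu pr xq xu theta tau + accu hq hu pr xq xu theta tau)"

text \<open>s_2(theta,tau) = E[A(tau) | Theta = theta].\<close>
definition s2 :: "(real \<times> real \<Rightarrow> real) \<Rightarrow> (real \<times> real \<Rightarrow> real) \<Rightarrow> real \<Rightarrow> real \<Rightarrow> real \<Rightarrow> real \<Rightarrow> real \<Rightarrow> real" where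
  "s2 hq hu pr xq xu theta tau =
     (accq hq hu pr xq xu theta tau + accu hq hu pr xq xu theta tau) / (margq hq pr theta + margu hu pr theta)"

text \<open>phi(theta) = P(Q=1 | Theta = theta).\<close>
definition phi :: "(real \<times> real \<Rightarrow> real) \<Rightarrow> (real \<times> real \<Rightarrow> real) \<Rightarrow> real \<Rightarrow> real \<Rightarrow> real" where
  "phi hq hu pr theta = margq hq pr theta / (margq hq pr theta + margu hu pr theta)"

definition NN :: "real \<Rightarrow> real \<Rightarrow> real \<Rightarrow> real" where
  "NN xq xu s = s * xq - (1 - s) * xu"

definition Aprime :: "real \<Rightarrow> real \<Rightarrow> real \<Rightarrow> real \<Rightarrow> real" where
  "Aprime xq xu c s = (if NN xq xu s > c then 1 else 0)"

definition PP :: "real \<Rightarrow> real \<Rightarrow> real \<Rightarrow> real \<Rightarrow> real \<Rightarrow> real" where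
  "PP xq xu c Q s = Aprime xq xu c s * (Q * xq - (1 - Q) * xu)"

definition regret :: "real \<Rightarrow> real \<Rightarrow> real \<Rightarrow> real \<Rightarrow> real \<Rightarrow> real" where
  "regret xq xu c Q s = NN xq xu s - PP xq xu c Q s"

definition tau1d :: "(real \<times> real \<Rightarrow> real) \<Rightarrow> (real \<times> real \<Rightarrow> real) \<Rightarrow> real \<Rightarrow> real \<Rightarrow> real \<Rightarrow> real \<Rightarrow> real \<Rightarrow> real" where
  "tau1d hq hu pr xq xu beta theta =
     (THE tau. tau \<in> {-xu<..<xq} \<and> s1 hq hu pr xq xu theta tau = beta)"

definition tau2d :: "(real \<times> real \<Rightarrow> real) \<Rightarrow> (real \<times> real \<Rightarrow> real) \<Rightarrow> real \<Rightarrow> real \<Rightarrow> real \<Rightarrow> real \<Rightarrow> real \<Rightarrow> real" where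
  "tau2d hq hu pr xq xu beta theta =
     (THE tau. tau \<in> {-xu<..<xq} \<and> s2 hq hu pr xq xu theta tau = beta)"

end

theory Submission
  imports Defs
begin


definition TT :: "(real \<Rightarrow> real) \<Rightarrow> real \<Rightarrow> real" where
  "TT h x = (LINT g|lborel. indicator {x<..} g * h g)"

lemma int_ind: "integrable lborel (h::real\<Rightarrow>real) \<Longrightarrow> A \<in> sets borel \<Longrightarrow> integrable lborel (\<lambda>g. indicator A g * h g)"
  using integrable_mult_indicator[of A lborel h] by simp

lemma int_pos:
  fixes f :: "real \<Rightarrow> real"
  assumes "integrable lborel f" "\<And>g. 0 \<le> f g" "\<And>g. a < g \<Longrightarrow> g < b \<Longrightarrow> 0 < f g" "a < b"
  shows "0 < integral\<^sup>L lborel f"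
proof (rule ccontr)
  assume "\<not> ?thesis"
  moreover have "0 \<le> integral\<^sup>L lborel f" using assms(2) by (simp add: integral_nonneg)
  ultimately have "integral\<^sup>L lborel f = 0" by simp
  then have "AE g in lborel. f g = 0" using integral_nonneg_eq_0_iff_AE[OF assms(1)] assms(2) by simp
  then have "AE g in lborel. g \<notin> {a<..<b}"
    by eventually_elim (use assms(3) in force)
  then have "emeasure lborel {a<..<b} = 0"
    by (subst (asm) AE_iff_measurable[of "{a<..<b}"]) auto
  then show False using assms(4) by simp
qed

lemma TT_split:
  assumes "integrable lborel h" "x \<le> y"
  shows "TT h x - TT h y = (LINT g|lborel. indicator {x<..y} g * h g)"
proof -
  have "TT h x - TT h y = (LINT g|lborel. indicator {x<..} g * h g - indicator {y<..} g * h g)"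
    unfolding TT_def by (subst Bochner_Integration.integral_diff) (auto intro!: int_ind assms)
  also have "\<dots> = (LINT g|lborel. indicator {x<..y} g * h g)"
    by (rule Bochner_Integration.integral_cong) (use assms(2) in \<open>auto simp: indicator_def\<close>)
  finally show ?thesis .
qed

lemma TT_pos:
  assumes "integrable lborel h" "\<And>g. h g > 0"
  shows "TT h x > 0"
  unfolding TT_def
  apply (rule int_pos[where a=x and b="x+1"])
     apply (rule int_ind[OF assms(1)], simp)
  using assms(2) by (simp_all add: indicator_def less_imp_le)

lemma TT_strict:
  assumes "integrable lborel h" "\<And>g. h g > 0" "x < y"
  shows "TT h y < TT h x"
proof -
  have "0 < (LINT g|lborel. indicator {x<..y} g * h g)"
    apply (rule int_pos[where a=x and b=y])
       apply (rule int_ind[OF assms(1)], simp)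
    using assms(2,3) by (simp_all add: indicator_def less_imp_le)
  moreover have "TT h x - TT h y = (LINT g|lborel. indicator {x<..y} g * h g)"
    using TT_split[OF assms(1)] assms(3) by simp
  ultimately show ?thesis by linarith
qed

lemma TT_seq:
  assumes "integrable lborel h" "X \<longlonglongrightarrow> x0"
  shows "(\<lambda>n. TT h (X n)) \<longlonglongrightarrow> TT h x0"
  unfolding TT_def
proof (rule integral_dominated_convergence[where w="\<lambda>g. \<bar>h g\<bar>"])
  have hm: "h \<in> borel_measurable lborel" using assms(1) by auto
  show "(\<lambda>g. indicator {x0<..} g * h g) \<in> borel_measurable lborel" using hm by measurable
  show "(\<lambda>g. indicator {X i<..} g * h g) \<in> borel_measurable lborel" for i using hm by measurable
  show "integrable lborel (\<lambda>g. \<bar>h g\<bar>)" using assms(1) by auto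
  show "AE g in lborel. norm (indicator {X i<..} g * h g) \<le> \<bar>h g\<bar>" for i
    by (auto simp: indicator_def)
  show "AE g in lborel. (\<lambda>i. indicator {X i<..} g * h g) \<longlonglongrightarrow> indicator {x0<..} g * h g"
    using AE_lborel_singleton[of x0]
  proof eventually_elim
    fix g assume "g \<noteq> x0"
    show "(\<lambda>i. indicator {X i<..} g * h g) \<longlonglongrightarrow> indicator {x0<..} g * h g"
    proof (cases "g < x0")
      case True
      then have "eventually (\<lambda>i. X i > g) sequentially"
        using assms(2) order_tendstoD(1) by blast
      then have "eventually (\<lambda>i. indicator {x0<..} g * h g = indicator {X i<..} g * h g) sequentially"
        by eventually_elim (use True in \<open>auto simp: indicator_def\<close>)
      then show ?thesis by (rule Lim_transform_eventually[OF tendsto_const])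
    next
      case False
      then have "g > x0" using \<open>g \<noteq> x0\<close> by simp
      then have "eventually (\<lambda>i. X i < g) sequentially"
        using assms(2) order_tendstoD(2) by blast
      then have "eventually (\<lambda>i. indicator {x0<..} g * h g = indicator {X i<..} g * h g) sequentially"
        by eventually_elim (use \<open>g > x0\<close> in \<open>auto simp: indicator_def\<close>)
      then show ?thesis by (rule Lim_transform_eventually[OF tendsto_const])
    qed
  qed
qed

lemma TT_cont:
  assumes "integrable lborel h"
  shows "continuous_on S (TT h)"
  by (intro continuous_at_imp_continuous_on ballI continuous_at_sequentiallyI TT_seq assms)

lemma TT_top:
  assumes "integrable lborel h"
  shows "(TT h \<longlongrightarrow> 0) at_top"
proof -
  have hm: "h \<in> borel_measurable lborel" using assms(1) by auto
  have "((\<lambda>t. integral\<^sup>L lborel (\<lambda>g. indicator {t<..} g * h g)) \<longlongrightarrow> integral\<^sup>L lborel (\<lambda>_::real. 0::real)) at_top"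
  proof (rule integral_dominated_convergence_at_top[where w="\<lambda>g. \<bar>h g\<bar>" and f="\<lambda>_. 0::real" and s="\<lambda>t g. indicator {t<..} g * h g" and M=lborel])
    show "(\<lambda>_. 0::real) \<in> borel_measurable lborel" by simp
    show "(\<lambda>g. indicator {t<..} g * h g) \<in> borel_measurable lborel" for t using hm by measurable
    show "integrable lborel (\<lambda>g. \<bar>h g\<bar>)" using assms(1) by auto
    show "\<forall>\<^sub>F i in at_top. AE g in lborel. norm (indicator {i<..} g * h g) \<le> \<bar>h g\<bar>"
      by (auto simp: indicator_def)
    show "AE g in lborel. ((\<lambda>i. indicator {i<..} g * h g) \<longlongrightarrow> 0) at_top"
    proof (rule AE_I2)
      fix g
      have "eventually (\<lambda>i. 0 = indicator {i<..} g * h g) at_top"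
        using eventually_ge_at_top[of g] by eventually_elim (auto simp: indicator_def)
      then show "((\<lambda>i. indicator {i<..} g * h g) \<longlongrightarrow> 0) at_top"
        by (rule Lim_transform_eventually[OF tendsto_const])
    qed
  qed
  then show ?thesis unfolding TT_def by simp
qed

lemma TT_bot:
  assumes "integrable lborel h"
  shows "((\<lambda>t. TT h (-t)) \<longlongrightarrow> integral\<^sup>L lborel h) at_top"
  unfolding TT_def
proof (rule integral_dominated_convergence_at_top[where w="\<lambda>g. \<bar>h g\<bar>"])
  have hm: "h \<in> borel_measurable lborel" using assms(1) by auto
  show "h \<in> borel_measurable lborel" by fact
  show "(\<lambda>g. indicator {-t<..} g * h g) \<in> borel_measurable lborel" for t using hm by measurable
  show "integrable lborel (\<lambda>g. \<bar>h g\<bar>)" using assms(1) by auto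
  show "\<forall>\<^sub>F i in at_top. AE g in lborel. norm (indicator {-i<..} g * h g) \<le> \<bar>h g\<bar>"
    by (auto simp: indicator_def)
  show "AE g in lborel. ((\<lambda>i. indicator {-i<..} g * h g) \<longlongrightarrow> h g) at_top"
  proof (rule AE_I2)
    fix g
    have "eventually (\<lambda>i. h g = indicator {-i<..} g * h g) at_top"
      using eventually_gt_at_top[of "-g"] by eventually_elim (auto simp: indicator_def)
    then show "((\<lambda>i. indicator {-i<..} g * h g) \<longlongrightarrow> h g) at_top"
      by (rule Lim_transform_eventually[OF tendsto_const])
  qed
qed


lemma regret_cmp:
  fixes xq xu c Q a b :: real
  assumes "xq > 0" "xu > 0"
    and "(a > (xu + c) / (xq + xu) \<and> b > (xu + c) / (xq + xu)) \<or> (a < (xu + c) / (xq + xu) \<and> b < (xu + c) / (xq + xu))"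
  shows "a > b \<longleftrightarrow> regret xq xu c Q b < regret xq xu c Q a"
proof -
  have NN: "NN xq xu s > c \<longleftrightarrow> s > (xu + c) / (xq + xu)" for s
  proof -
    have e: "NN xq xu s = s * (xq + xu) - xu" unfolding NN_def by (simp add: algebra_simps)
    have "s > (xu + c) / (xq + xu) \<longleftrightarrow> s * (xq + xu) > xu + c"
      using assms(1,2) by (simp add: pos_divide_less_eq)
    then show ?thesis unfolding e by linarith
  qed
  have d: "NN xq xu a - NN xq xu b = (a - b) * (xq + xu)" unfolding NN_def by (simp add: algebra_simps)
  have 1: "a > b \<longleftrightarrow> NN xq xu b < NN xq xu a"
  proof -
    have "0 < (a - b) * (xq + xu) \<longleftrightarrow> a > b" using assms(1,2) by (simp add: zero_less_mult_iff)
    then show ?thesis using d by linarith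
  qed
  have 2: "Aprime xq xu c a = Aprime xq xu c b"
  proof -
    have "(NN xq xu a > c) = (NN xq xu b > c)"
      unfolding NN[of a] NN[of b] using assms(3) by (smt (verit))
    then show ?thesis unfolding Aprime_def by simp
  qed
  have "regret xq xu c Q b < regret xq xu c Q a \<longleftrightarrow> NN xq xu b < NN xq xu a"
    unfolding regret_def PP_def 2 by linarith
  then show ?thesis using 1 by simp
qed

lemma frac_lt: "b > 0 \<Longrightarrow> d > 0 \<Longrightarrow> a * d < c * b \<Longrightarrow> a / b < c / (d::real)"
  by (simp add: field_simps)

locale sett =
  fixes hq hu :: "real \<times> real \<Rightarrow> real" and pr xq xu theta :: real
  assumes pr: "0 < pr" "pr < 1"
    and pos: "\<And>p. hq p > 0" "\<And>p. hu p > 0"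
    and marg: "\<And>t. integrable lborel (\<lambda>g. hq (t, g))" "\<And>t. integrable lborel (\<lambda>g. hu (t, g))"
    and cont: "continuous_on UNIV (lr hq hu)"
    and mono_g: "\<And>t. strict_mono (\<lambda>g. lr hq hu (t, g))"
    and inf0: "\<And>t. (INF g. lr hq hu (t, g)) = 0"
    and supinf: "\<And>t. \<not> bdd_above (range (\<lambda>g. lr hq hu (t, g)))"
    and pay: "xq > 0" "xu > 0"
begin

definition "hQ g = hq (theta, g)"
definition "hU g = hu (theta, g)"
definition "L g = lr hq hu (theta, g)"
definition "Tq = TT hQ"
definition "Tu = TT hU"
definition "Iq = integral\<^sup>L lborel hQ"
definition "Iu = integral\<^sup>L lborel hU"
definition "MM = pr * Iq + (1 - pr) * Iu"
definition "S1 x = pr * Tq x / (pr * Tq x + (1 - pr) * Tu x)"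
definition "S2 x = (pr * Tq x + (1 - pr) * Tu x) / MM"

lemma hQ_int: "integrable lborel hQ" using marg(1) unfolding hQ_def by simp
lemma hU_int: "integrable lborel hU" using marg(2) unfolding hU_def by simp
lemma hQ_pos: "hQ g > 0" using pos(1) unfolding hQ_def by simp
lemma hU_pos: "hU g > 0" using pos(2) unfolding hU_def by simp
lemma L_eq: "L g = hQ g / hU g" unfolding L_def lr_def hQ_def hU_def by simp
lemma L_pos: "L g > 0" using L_eq hQ_pos hU_pos by simp
lemma hQ_L: "hQ g = L g * hU g" using L_eq hU_pos[of g] by simp
lemma L_mono: "strict_mono L" using mono_g[of theta] unfolding L_def by simp
lemma L_less: "L x < L y \<longleftrightarrow> x < y" using L_mono strict_mono_less by blast
lemma L_cont: "continuous_on S L"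
  unfolding L_def
  by (rule continuous_on_compose2[OF cont]) (auto intro!: continuous_intros)

lemma Tq_pos: "Tq x > 0" unfolding Tq_def by (rule TT_pos[OF hQ_int hQ_pos])
lemma Tu_pos: "Tu x > 0" unfolding Tu_def by (rule TT_pos[OF hU_int hU_pos])
lemma Iq_pos: "Iq > 0" unfolding Iq_def
  by (rule int_pos[OF hQ_int, of 0 1]) (auto intro: less_imp_le hQ_pos)
lemma Iu_pos: "Iu > 0" unfolding Iu_def
  by (rule int_pos[OF hU_int, of 0 1]) (auto intro: less_imp_le hU_pos)
lemma MM_pos: "MM > 0" unfolding MM_def using Iq_pos Iu_pos pr by (simp add: add_pos_pos)

lemma S2_strict: "x < y \<Longrightarrow> S2 y < S2 x"
proof -
  assume "x < y"
  then have "Tq y < Tq x" "Tu y < Tu x" unfolding Tq_def Tu_def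
    by (auto intro: TT_strict hQ_int hU_int hQ_pos hU_pos)
  then have "pr * Tq y + (1 - pr) * Tu y < pr * Tq x + (1 - pr) * Tu x"
    using pr by (intro add_strict_mono mult_strict_left_mono) auto
  then show ?thesis unfolding S2_def using MM_pos by (simp add: divide_strict_right_mono)
qed

lemma L_Tu: "L y * Tu y < Tq y"
proof -
  have "0 < (LINT g|lborel. indicator {y<..} g * hQ g - L y * (indicator {y<..} g * hU g))"
  proof (rule int_pos[of _ y "y+1"])
    show "integrable lborel (\<lambda>g. indicator {y<..} g * hQ g - L y * (indicator {y<..} g * hU g))"
      by (intro Bochner_Integration.integrable_diff integrable_mult_right int_ind hQ_int hU_int) auto
    have *: "y < g \<Longrightarrow> L y * hU g < hQ g" for g
      using hQ_L[of g] L_less[of y g] hU_pos[of g] by (simp add: mult_strict_right_mono)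
    show "0 \<le> indicator {y<..} g * hQ g - L y * (indicator {y<..} g * hU g)" for g
      using *[of g] by (auto simp: indicator_def)
    show "y < g \<Longrightarrow> g < y + 1 \<Longrightarrow> 0 < indicator {y<..} g * hQ g - L y * (indicator {y<..} g * hU g)" for g
      using *[of g] by (auto simp: indicator_def)
  qed simp
  also have "\<dots> = Tq y - L y * Tu y" unfolding Tq_def Tu_def TT_def
    by (subst Bochner_Integration.integral_diff) (auto intro!: integrable_mult_right int_ind hQ_int hU_int)
  finally show ?thesis by simp
qed

lemma L_Tu_split: assumes "x < y" shows "Tq x - Tq y \<le> L y * (Tu x - Tu y)"
proof -
  have "Tq x - Tq y = (LINT g|lborel. indicator {x<..y} g * hQ g)"
    unfolding Tq_def using TT_split[OF hQ_int] assms by simp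
  also have "\<dots> \<le> (LINT g|lborel. L y * (indicator {x<..y} g * hU g))"
  proof (rule integral_mono)
    show "integrable lborel (\<lambda>g. indicator {x<..y} g * hQ g)" by (intro int_ind hQ_int) auto
    show "integrable lborel (\<lambda>g. L y * (indicator {x<..y} g * hU g))"
      by (intro integrable_mult_right int_ind hU_int) auto
    fix g
    have "g \<le> y \<Longrightarrow> hQ g \<le> L y * hU g"
      using hQ_L[of g] L_less[of y g] hU_pos[of g] by (simp add: mult_right_mono)
    then show "indicator {x<..y} g * hQ g \<le> L y * (indicator {x<..y} g * hU g)"
      by (auto simp: indicator_def)
  qed
  also have "\<dots> = L y * (Tu x - Tu y)"
    unfolding Tu_def using TT_split[OF hU_int] assms by simp
  finally show ?thesis .
qed

lemma S1_strict: assumes "x < y" shows "S1 x < S1 y"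
proof -
  define A B A' B' l where "A = Tq y" "B = Tu y" "A' = Tq x" "B' = Tu x" "l = L y"
  have pos: "A > 0" "B > 0" "A' > 0" "B' > 0" "l > 0"
    using Tq_pos Tu_pos L_pos unfolding A_B_A'_B'_l_def by auto
  have h1: "l * B < A" using L_Tu unfolding A_B_A'_B'_l_def by simp
  have h2: "A' - A \<le> l * (B' - B)" using L_Tu_split[OF assms] unfolding A_B_A'_B'_l_def by simp
  have h3: "A < A'" using TT_strict[OF hQ_int hQ_pos assms] unfolding A_B_A'_B'_l_def Tq_def by simp
  have "A * (A' - A) \<le> A * (l * (B' - B))" using h2 pos by (simp add: mult_left_mono)
  moreover have "(A' - A) * (l * B) < (A' - A) * A" using h1 h3 by (simp add: mult_strict_left_mono)
  ultimately have "l * (A' * B) < l * (A * B')" by (simp add: algebra_simps)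
  then have key: "A' * B < A * B'" using pos by simp
  have "pr * A' * (pr * A + (1 - pr) * B) < pr * A * (pr * A' + (1 - pr) * B')"
  proof -
    have "pr * (1 - pr) * (A' * B) < pr * (1 - pr) * (A * B')"
      using key pr by (intro mult_strict_left_mono) auto
    then show ?thesis by (simp add: algebra_simps)
  qed
  moreover have "pr * A + (1 - pr) * B > 0" "pr * A' + (1 - pr) * B' > 0"
    using pos pr by (auto intro!: add_pos_pos)
  ultimately have "pr * A' / (pr * A' + (1 - pr) * B') < pr * A / (pr * A + (1 - pr) * B)"
    by (simp add: divide_simps)
  then show ?thesis unfolding S1_def A_B_A'_B'_l_def by simp
qed

lemma S1_cont: "continuous_on S S1"
proof -
  have "continuous_on S Tq" "continuous_on S Tu" unfolding Tq_def Tu_def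
    by (auto intro: TT_cont hQ_int hU_int)
  moreover have "\<forall>x\<in>S. pr * Tq x + (1 - pr) * Tu x \<noteq> 0"
    using Tq_pos Tu_pos pr by (smt (verit) mult_pos_pos)
  ultimately show ?thesis unfolding S1_def[abs_def]
    by (intro continuous_intros) auto
qed

lemma S2_cont: "continuous_on S S2"
proof -
  have "continuous_on S Tq" "continuous_on S Tu" unfolding Tq_def Tu_def
    by (auto intro: TT_cont hQ_int hU_int)
  then show ?thesis unfolding S2_def[abs_def] using MM_pos
    by (intro continuous_intros) auto
qed

lemma S2_top: "(S2 \<longlongrightarrow> 0) at_top"
proof -
  have "(Tq \<longlongrightarrow> 0) at_top" "(Tu \<longlongrightarrow> 0) at_top" unfolding Tq_def Tu_def
    by (auto intro: TT_top hQ_int hU_int)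
  then have "((\<lambda>x. (pr * Tq x + (1 - pr) * Tu x) / MM) \<longlongrightarrow> (pr * 0 + (1 - pr) * 0) / MM) at_top"
    using MM_pos by (intro tendsto_intros) auto
  then show ?thesis unfolding S2_def[abs_def] by simp
qed

lemma S2_bot: "((\<lambda>t. S2 (-t)) \<longlongrightarrow> 1) at_top"
proof -
  have "((\<lambda>t. Tq (-t)) \<longlongrightarrow> Iq) at_top" "((\<lambda>t. Tu (-t)) \<longlongrightarrow> Iu) at_top"
    unfolding Tq_def Tu_def Iq_def Iu_def
    by (auto intro: TT_bot hQ_int hU_int)
  then have "((\<lambda>x. (pr * Tq (-x) + (1 - pr) * Tu (-x)) / MM) \<longlongrightarrow> (pr * Iq + (1 - pr) * Iu) / MM) at_top"
    using MM_pos by (intro tendsto_intros) auto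
  then show ?thesis unfolding S2_def[abs_def] using MM_pos by (simp add: MM_def)
qed

lemma S1_bot: "((\<lambda>t. S1 (-t)) \<longlongrightarrow> pr * Iq / (pr * Iq + (1 - pr) * Iu)) at_top"
proof -
  have "((\<lambda>t. Tq (-t)) \<longlongrightarrow> Iq) at_top" "((\<lambda>t. Tu (-t)) \<longlongrightarrow> Iu) at_top"
    unfolding Tq_def Tu_def Iq_def Iu_def
    by (auto intro: TT_bot hQ_int hU_int)
  then have "((\<lambda>x. pr * Tq (-x) / (pr * Tq (-x) + (1 - pr) * Tu (-x))) \<longlongrightarrow> pr * Iq / (pr * Iq + (1 - pr) * Iu)) at_top"
    using MM_pos unfolding MM_def by (intro tendsto_intros) auto
  then show ?thesis unfolding S1_def[abs_def] by simp
qed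

lemma S2_root:
  assumes "0 < b" "b < 1"
  shows "\<exists>x. S2 x = b"
proof -
  have "eventually (\<lambda>x. S2 x < b) at_top" using S2_top assms(1) by (rule order_tendstoD)
  then obtain y where y: "S2 y < b" by (meson eventually_at_top_linorder order_refl)
  have "eventually (\<lambda>t. S2 (-t) > b) at_top" using S2_bot assms(2) by (rule order_tendstoD)
  then obtain t where t: "S2 (-t) > b" by (meson eventually_at_top_linorder order_refl)
  have "-t < y"
  proof (rule ccontr)
    assume "\<not> -t < y"
    then have "y = -t \<or> y < -t" by auto
    then show False using S2_strict[of y "-t"] y t by auto
  qed
  then show ?thesis using IVT2'[of S2 y b "-t", OF _ _ _ S2_cont] y t by auto
qed

lemma S1_big:
  assumes "0 < b" "b < 1" "(1 - pr) * b \<le> pr * (1 - b) * L y"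
  shows "b < S1 y"
proof -
  define A B l where "A = Tq y" "B = Tu y" "l = L y"
  have pos: "A > 0" "B > 0" "l > 0" using Tq_pos Tu_pos L_pos unfolding A_B_l_def by auto
  have h1: "l * B < A" using L_Tu unfolding A_B_l_def by simp
  have "(1 - pr) * b * (l * B) < (1 - pr) * b * A"
    using h1 pr assms by (intro mult_strict_left_mono) auto
  also have "\<dots> \<le> pr * (1 - b) * l * A" using assms(3) pos unfolding A_B_l_def
    by (simp add: mult_right_mono)
  finally have "l * ((1 - pr) * b * B) < l * (pr * (1 - b) * A)" by (simp add: algebra_simps)
  then have "(1 - pr) * b * B < pr * (1 - b) * A" using pos by simp
  then have "b * (pr * A + (1 - pr) * B) < pr * A" by (simp add: algebra_simps)
  moreover have "pr * A + (1 - pr) * B > 0" using pos pr by (auto intro!: add_pos_pos)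
  ultimately show ?thesis unfolding S1_def A_B_l_def by (simp add: divide_simps)
qed

lemma S1_root:
  assumes "pr * Iq / (pr * Iq + (1 - pr) * Iu) < b" "b < 1" "0 < b"
  shows "\<exists>x. S1 x = b"
proof -
  have "\<exists>y. L y > (1 - pr) * b / (pr * (1 - b))"
    using supinf[of theta] unfolding bdd_above_def L_def by (fastforce simp: not_le)
  then obtain y where "L y > (1 - pr) * b / (pr * (1 - b))" by blast
  then have "(1 - pr) * b \<le> pr * (1 - b) * L y" using pr assms(2,3) by (simp add: divide_simps mult.commute)
  then have y: "b < S1 y" using S1_big assms by simp
  have "eventually (\<lambda>t. S1 (-t) < b) at_top" using S1_bot assms(1) by (rule order_tendstoD)
  then obtain t where t: "S1 (-t) < b" by (meson eventually_at_top_linorder order_refl)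
  have "-t < y"
  proof (rule ccontr)
    assume "\<not> -t < y"
    then have "y = -t \<or> y < -t" by auto
    then show False using S1_strict[of y "-t"] y t by auto
  qed
  then show ?thesis using IVT'[of S1 "-t" b y, OF _ _ _ S1_cont] y t by auto
qed

lemma thr_pos: "-xu < tau \<Longrightarrow> tau < xq \<Longrightarrow> thr pr xq xu tau > 0"
  unfolding thr_def using pr by (intro divide_pos_pos mult_pos_pos) auto

lemma thr_mono:
  assumes "-xu < tau" "tau < tau'" "tau' < xq"
  shows "thr pr xq xu tau < thr pr xq xu tau'"
proof -
  have "(xu + tau) * (xq - tau') < (xu + tau') * (xq - tau)"
  proof -
    have "(xu + tau') * (xq - tau) - (xu + tau) * (xq - tau') = (tau' - tau) * (xq + xu)"
      by (simp add: algebra_simps)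
    moreover have "(tau' - tau) * (xq + xu) > 0" using assms pay by simp
    ultimately show ?thesis by linarith
  qed
  then have "(1 - pr) * pr * ((xu + tau) * (xq - tau')) < (1 - pr) * pr * ((xu + tau') * (xq - tau))"
    using pr by (intro mult_strict_left_mono) auto
  then have "((1 - pr) * (xu + tau)) * (pr * (xq - tau')) < ((1 - pr) * (xu + tau')) * (pr * (xq - tau))"
    by (simp add: algebra_simps)
  moreover have "pr * (xq - tau') > 0" "pr * (xq - tau) > 0" using pr assms by auto
  ultimately show ?thesis unfolding thr_def by (intro frac_lt) (auto simp: algebra_simps)
qed

lemma tau_x:
  assumes "-xu < tau" "tau < xq"
  shows "\<exists>x. L x = thr pr xq xu tau \<and> s1 hq hu pr xq xu theta tau = S1 x \<and> s2 hq hu pr xq xu theta tau = S2 x"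
proof -
  define t where "t = thr pr xq xu tau"
  have tpos: "t > 0" using thr_pos assms unfolding t_def by simp
  have "Inf (range L) = 0" using inf0[of theta] unfolding L_def by simp
  then obtain g1 where g1: "L g1 < t" using cInf_lessD[of "range L" t] tpos by auto
  have "\<exists>y. L y > t"
    using supinf[of theta] unfolding bdd_above_def L_def by (fastforce simp: not_le)
  then obtain g2 where g2: "L g2 > t" by blast
  have "g1 \<le> g2" using g1 g2 L_less[of g1 g2] by simp
  then obtain x where x: "L x = t" using IVT'[of L g1 t g2, OF _ _ _ L_cont] g1 g2 by auto
  have "thr pr xq xu tau < lr hq hu (theta, g) \<longleftrightarrow> x < g" for g
    using x L_less[of x g] unfolding t_def L_def by simp
  then have acc: "acc_set hq hu pr xq xu theta tau = {x<..}"
    unfolding acc_set_def by auto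
  have "s1 hq hu pr xq xu theta tau = S1 x"
    unfolding s1_def accq_def accu_def acc S1_def Tq_def Tu_def TT_def hQ_def hU_def by simp
  moreover have "s2 hq hu pr xq xu theta tau = S2 x"
    unfolding s2_def accq_def accu_def acc S2_def Tq_def Tu_def TT_def hQ_def hU_def
      MM_def Iq_def Iu_def margq_def margu_def by simp
  ultimately show ?thesis using x unfolding t_def by blast
qed

lemma s1_mono:
  assumes "-xu < tau" "tau < tau'" "tau' < xq"
  shows "s1 hq hu pr xq xu theta tau < s1 hq hu pr xq xu theta tau'"
proof -
  obtain x where x: "L x = thr pr xq xu tau" "s1 hq hu pr xq xu theta tau = S1 x"
    using tau_x[of tau] assms by auto
  obtain x' where x': "L x' = thr pr xq xu tau'" "s1 hq hu pr xq xu theta tau' = S1 x'"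
    using tau_x[of tau'] assms by auto
  have "x < x'" using thr_mono[OF assms] x x' L_less by metis
  then show ?thesis using S1_strict x x' by simp
qed

lemma s2_mono:
  assumes "-xu < tau" "tau < tau'" "tau' < xq"
  shows "s2 hq hu pr xq xu theta tau' < s2 hq hu pr xq xu theta tau"
proof -
  obtain x where x: "L x = thr pr xq xu tau" "s2 hq hu pr xq xu theta tau = S2 x"
    using tau_x[of tau] assms by auto
  obtain x' where x': "L x' = thr pr xq xu tau'" "s2 hq hu pr xq xu theta tau' = S2 x'"
    using tau_x[of tau'] assms by auto
  have "x < x'" using thr_mono[OF assms] x x' L_less by metis
  then show ?thesis using S2_strict x x' by simp
qed

lemma tau_of_x:
  "\<exists>tau. -xu < tau \<and> tau < xq \<and> s1 hq hu pr xq xu theta tau = S1 x \<and> s2 hq hu pr xq xu theta tau = S2 x"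
proof -
  define t where "t = L x"
  have tpos: "t > 0" using L_pos unfolding t_def by simp
  define D where "D = (1 - pr) + t * pr"
  have Dpos: "D > 0" using tpos pr unfolding D_def by (smt (verit) mult_pos_pos)
  define tau where "tau = (t * pr * xq - (1 - pr) * xu) / D"
  have e1: "xu + tau = t * pr * (xq + xu) / D"
    unfolding tau_def using Dpos by (simp add: field_simps D_def)
  have e2: "xq - tau = (1 - pr) * (xq + xu) / D"
    unfolding tau_def using Dpos by (simp add: field_simps D_def)
  have "xu + tau > 0" unfolding e1 using tpos pr pay Dpos by simp
  moreover have "xq - tau > 0" unfolding e2 using pr pay Dpos by simp
  moreover have "thr pr xq xu tau = t"
  proof -
    have den: "pr * ((1 - pr) * (xq + xu) / D) > 0" using Dpos pr pay by simp
    have "(1 - pr) * (t * pr * (xq + xu) / D) = t * (pr * ((1 - pr) * (xq + xu) / D))"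
      by (simp add: algebra_simps)
    then show ?thesis unfolding thr_def e1 e2 using den Dpos pr pay by simp
  qed
  ultimately have b: "-xu < tau" "tau < xq" and th: "thr pr xq xu tau = t" by auto
  obtain x' where x': "L x' = thr pr xq xu tau" "s1 hq hu pr xq xu theta tau = S1 x'"
    "s2 hq hu pr xq xu theta tau = S2 x'"
    using tau_x[OF b] by auto
  have "x' = x" using x'(1) th unfolding t_def using L_mono strict_mono_eq by metis
  then show ?thesis using b x' by blast
qed

lemma tau1_char:
  assumes "pr * Iq / (pr * Iq + (1 - pr) * Iu) < b" "b < 1" "0 < b"
  shows "-xu < tau1d hq hu pr xq xu b theta \<and> tau1d hq hu pr xq xu b theta < xq \<and>
         s1 hq hu pr xq xu theta (tau1d hq hu pr xq xu b theta) = b"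
proof -
  obtain x where "S1 x = b" using S1_root assms by blast
  then obtain tau where tau: "-xu < tau" "tau < xq" "s1 hq hu pr xq xu theta tau = b"
    using tau_of_x[of x] by auto
  have "tau1d hq hu pr xq xu b theta = tau"
    unfolding tau1d_def
  proof (rule the_equality)
    show "tau \<in> {- xu<..<xq} \<and> s1 hq hu pr xq xu theta tau = b" using tau by simp
    fix tau' assume h: "tau' \<in> {- xu<..<xq} \<and> s1 hq hu pr xq xu theta tau' = b"
    show "tau' = tau"
    proof (rule ccontr)
      assume "tau' \<noteq> tau"
      then have "tau' < tau \<or> tau < tau'" by auto
      then show False using s1_mono[of tau' tau] s1_mono[of tau tau'] h tau by auto
    qed
  qed
  then show ?thesis using tau by simp
qed

lemma tau2_char:
  assumes "b < 1" "0 < b"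
  shows "-xu < tau2d hq hu pr xq xu b theta \<and> tau2d hq hu pr xq xu b theta < xq \<and>
         s2 hq hu pr xq xu theta (tau2d hq hu pr xq xu b theta) = b"
proof -
  obtain x where "S2 x = b" using S2_root assms by blast
  then obtain tau where tau: "-xu < tau" "tau < xq" "s2 hq hu pr xq xu theta tau = b"
    using tau_of_x[of x] by auto
  have "tau2d hq hu pr xq xu b theta = tau"
    unfolding tau2d_def
  proof (rule the_equality)
    show "tau \<in> {- xu<..<xq} \<and> s2 hq hu pr xq xu theta tau = b" using tau by simp
    fix tau' assume h: "tau' \<in> {- xu<..<xq} \<and> s2 hq hu pr xq xu theta tau' = b"
    show "tau' = tau"
    proof (rule ccontr)
      assume "tau' \<noteq> tau"
      then have "tau' < tau \<or> tau < tau'" by auto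
      then show False using s2_mono[of tau' tau] s2_mono[of tau tau'] h tau by auto
    qed
  qed
  then show ?thesis using tau by simp
qed

lemma phi_eq: "phi hq hu pr theta = pr * Iq / (pr * Iq + (1 - pr) * Iu)"
  unfolding phi_def margq_def margu_def Iq_def Iu_def hQ_def hU_def by simp

end

theorem mainTheorem13:
  fixes hq hu :: "real \<times> real \<Rightarrow> real" and pr xq xu c theta Q tau :: real
  assumes pr: "0 < pr" "pr < 1"
    and pos: "\<And>p. hq p > 0" "\<And>p. hu p > 0"
    and meas: "hq \<in> borel_measurable lborel" "hu \<in> borel_measurable lborel"
    and dens: "(\<integral>\<^sup>+ p. ennreal (hq p) \<partial>lborel) = 1" "(\<integral>\<^sup>+ p. ennreal (hu p) \<partial>lborel) = 1"
    and marg: "\<And>t. integrable lborel (\<lambda>g. hq (t, g))" "\<And>t. integrable lborel (\<lambda>g. hu (t, g))"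
    and cont: "continuous_on UNIV (lr hq hu)"
    and mono_t: "\<And>g. strict_mono (\<lambda>t. lr hq hu (t, g))"
    and mono_g: "\<And>t. strict_mono (\<lambda>g. lr hq hu (t, g))"
    and inf0: "\<And>t. (INF g. lr hq hu (t, g)) = 0"
    and supinf: "\<And>t. \<not> bdd_above (range (\<lambda>g. lr hq hu (t, g)))"
    and pay: "xq > 0" "xu > 0"
    and cut: "-xu < c" "c < xq"
    and below: "phi hq hu pr theta < (xu + c) / (xq + xu)"
    and Q: "Q = 0 \<or> Q = 1"
    and neq: "tau1d hq hu pr xq xu ((xu + c) / (xq + xu)) theta
              \<noteq> tau2d hq hu pr xq xu ((xu + c) / (xq + xu)) theta"
    and btw: "min (tau1d hq hu pr xq xu ((xu + c) / (xq + xu)) theta)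
                  (tau2d hq hu pr xq xu ((xu + c) / (xq + xu)) theta) < tau"
             "tau < max (tau1d hq hu pr xq xu ((xu + c) / (xq + xu)) theta)
                  (tau2d hq hu pr xq xu ((xu + c) / (xq + xu)) theta)"
  shows "s1 hq hu pr xq xu theta tau > s2 hq hu pr xq xu theta tau \<longleftrightarrow>
         regret xq xu c Q (s2 hq hu pr xq xu theta tau) < regret xq xu c Q (s1 hq hu pr xq xu theta tau)"
proof -
  interpret sett hq hu pr xq xu theta
    using pr pos marg cont mono_g inf0 supinf pay by unfold_locales auto
  define b where "b = (xu + c) / (xq + xu)"
  have b0: "0 < b" unfolding b_def using cut pay by simp
  have b1: "b < 1" unfolding b_def using cut pay by simp
  have ph: "pr * Iq / (pr * Iq + (1 - pr) * Iu) < b" using below phi_eq unfolding b_def by simp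
  define T1 where "T1 = tau1d hq hu pr xq xu b theta"
  define T2 where "T2 = tau2d hq hu pr xq xu b theta"
  have t1: "-xu < T1" "T1 < xq" "s1 hq hu pr xq xu theta T1 = b"
    using tau1_char[OF ph b1 b0] unfolding T1_def by auto
  have t2: "-xu < T2" "T2 < xq" "s2 hq hu pr xq xu theta T2 = b"
    using tau2_char[OF b1 b0] unfolding T2_def by auto
  have ne: "T1 \<noteq> T2" using neq unfolding T1_def T2_def b_def by simp
  have bt: "min T1 T2 < tau" "tau < max T1 T2" using btw unfolding T1_def T2_def b_def by auto
  have side: "(s1 hq hu pr xq xu theta tau > b \<and> s2 hq hu pr xq xu theta tau > b) \<or>
              (s1 hq hu pr xq xu theta tau < b \<and> s2 hq hu pr xq xu theta tau < b)"
  proof (cases "T1 < T2")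
    case True
    then have "T1 < tau" "tau < T2" using bt by auto
    then show ?thesis using s1_mono[of T1 tau] s2_mono[of tau T2] t1 t2 by auto
  next
    case False
    then have "T2 < T1" using ne by auto
    then have "T2 < tau" "tau < T1" using bt by auto
    then show ?thesis using s1_mono[of tau T1] s2_mono[of T2 tau] t1 t2 by auto
  qed
  show ?thesis using regret_cmp[OF pay side[unfolded b_def]] .
qed

end
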